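(* Let $k\ge2$ and consider the edge reinforced random walk on the even cycle $\mathcal G_{2k}$ with weight function $W:\mathbb N\to(0,\infty)$ satisfying $\sum_{m\in\mathbb N}\frac1{W(m)}<\infty$, arbitrary initial edge weights $X_0^e\in\mathbb N$ and arbitrary starting vertex. Then almost surely at least one edge of $\mathcal G_{2k}$ is traversed only finitely often, i.e. $\mathbb P(\text{all edges of }\mathcal G_{2k}\text{ are traversed infinitely often})=0$.
   Context: $\mathbb N=\{0,1,2,\ldots\}$. For $l\ge 3$, the cycle $\mathcal G_l$ has vertices $\{0,1,\ldots,l-1\}$ and edges $e_i=\{i,i+1\}$, $i=0,\ldots,l-1$, with addition modulo $l$. Edge reinforced random walk (ERRW) on a connected graph $\mathcal G$ of bounded degree: given a weight function $W:\mathbb N\to(0,\infty)$, initial edge weights $X_0^e\in\mathbb N$, and a starting vertex $I_0=v_0$, the process $(I_n)_{n\ge0}$ with natural filtration $(\mathcal F_n)$ jumps at each step to a neighbour of its current vertex with $\mathbb P(I_{n+1}=v'\mid\mathcal F_n)1_{\{I_n=v\}}=\frac{W(X_n^{\{v,v'\}})}{\sum_{w\sim v}W(X_n^{\{v,w\}})}1_{\{I_n=v\sim v'\}}$, where $X_n^e=X_0^e+\sum_{j=0}^{n-1}1_{\{\{I_j,I_{j+1}\}=e\}}$. *)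

theory Defs
  imports "HOL-Probability.Probability"
begin

definition cyc_adj :: "nat \<Rightarrow> nat \<Rightarrow> nat \<Rightarrow> bool" where
  "cyc_adj l v w \<longleftrightarrow> v < l \<and> w < l \<and> (w = Suc v mod l \<or> v = Suc w mod l)"

definition cyc_edge :: "nat \<Rightarrow> nat \<Rightarrow> nat set" where
  "cyc_edge l i = {i, Suc i mod l}"

definition edge_idx :: "nat \<Rightarrow> nat \<Rightarrow> nat \<Rightarrow> nat" where
  "edge_idx l v w = (if w = Suc v mod l then v else w)"

text \<open>X_n^{e_i} along a path h: initial weight plus number of traversals before time n.\<close>
definition errw_count :: "(nat \<Rightarrow> nat) \<Rightarrow> nat \<Rightarrow> (nat \<Rightarrow> nat) \<Rightarrow> nat \<Rightarrow> nat \<Rightarrow> nat" where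
  "errw_count X0 l h n i = X0 i + card {j. j < n \<and> {h j, h (Suc j)} = cyc_edge l i}"

definition errw_trans :: "(nat \<Rightarrow> real) \<Rightarrow> (nat \<Rightarrow> nat) \<Rightarrow> nat \<Rightarrow> (nat \<Rightarrow> nat) \<Rightarrow> nat \<Rightarrow> nat \<Rightarrow> real" where
  "errw_trans W X0 l h n w =
     (if cyc_adj l (h n) w
      then W (errw_count X0 l h n (edge_idx l (h n) w)) /
           (\<Sum>u\<in>{u. cyc_adj l (h n) u}. W (errw_count X0 l h n (edge_idx l (h n) u)))
      else 0)"

end

theory Submission
  imports Defs
begin


definition fct :: "(nat \<Rightarrow> real) \<Rightarrow> real \<Rightarrow> nat \<Rightarrow> nat \<Rightarrow> complex" where
  "fct W t i m = complex_of_real (W m) / (complex_of_real (W m) + \<i> * complex_of_real (t * (-1)^i))"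

definition psi :: "(nat \<Rightarrow> real) \<Rightarrow> real \<Rightarrow> nat \<Rightarrow> nat \<Rightarrow> complex" where
  "psi W t i x = prodinf (fct W t i) / (\<Prod>m<x. fct W t i m)"

lemma cmod_Wplus: "W > 0 \<Longrightarrow> cmod (complex_of_real W + \<i> * complex_of_real s) \<ge> W"
  "W > 0 \<Longrightarrow> cmod (complex_of_real W + \<i> * complex_of_real s) \<ge> \<bar>s\<bar>"
  "W > 0 \<Longrightarrow> complex_of_real W + \<i> * complex_of_real s \<noteq> 0"
proof -
  assume W: "W > 0"
  have e: "complex_of_real W + \<i> * complex_of_real s = Complex W s"
    by (simp add: complex_eq_iff)
  show "cmod (complex_of_real W + \<i> * complex_of_real s) \<ge> W"
    unfolding e using abs_Re_le_cmod[of "Complex W s"] by simp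
  show "cmod (complex_of_real W + \<i> * complex_of_real s) \<ge> \<bar>s\<bar>"
    unfolding e using abs_Im_le_cmod[of "Complex W s"] by simp
  show "complex_of_real W + \<i> * complex_of_real s \<noteq> 0"
    unfolding e using W by (simp add: complex_eq_iff)
qed

lemma fct_nz: "W m > 0 \<Longrightarrow> fct W t i m \<noteq> 0"
  unfolding fct_def using cmod_Wplus(3)[of "W m" "t * (-1)^i"] by simp

lemma fct_norm_le1: "W m > 0 \<Longrightarrow> cmod (fct W t i m) \<le> 1"
  unfolding fct_def using cmod_Wplus(1)[of "W m" "t * (-1)^i"]
  by (simp add: norm_divide divide_le_eq)

lemma fct_norm_le: "W m > 0 \<Longrightarrow> t \<noteq> 0 \<Longrightarrow> cmod (fct W t i m) \<le> W m / \<bar>t\<bar>"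
proof -
  assume W: "W m > 0" and t0: "t \<noteq> 0"
  have "\<bar>t * (-1)^i\<bar> = \<bar>t\<bar>" by (simp add: abs_mult)
  then have c: "cmod (complex_of_real (W m) + \<i> * complex_of_real (t * (-1)^i)) \<ge> \<bar>t\<bar>"
    using cmod_Wplus(2)[of "W m" "t * (-1)^i"] W by simp
  show ?thesis
  proof -
    from t0 have "\<bar>t\<bar> > 0" by simp
    have "cmod (fct W t i m) = W m / cmod (complex_of_real (W m) + \<i> * complex_of_real (t * (-1)^i))"
      unfolding fct_def using W by (simp add: norm_divide)
    also have "\<dots> \<le> W m / \<bar>t\<bar>"
      using c W \<open>\<bar>t\<bar> > 0\<close> by (intro divide_left_mono mult_pos_pos) auto
    finally show ?thesis .
  qed
qed

lemma fct_conv: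
  assumes W: "\<forall>m. W m > 0" and S: "summable (\<lambda>m. 1 / W m)"
  shows "convergent_prod (fct W t i)"
proof -
  have b: "cmod (fct W t i m - 1) \<le> \<bar>t\<bar> * (1 / W m)" for m
  proof -
    have Wm: "W m > 0" using W by auto
    let ?d = "complex_of_real (W m) + \<i> * complex_of_real (t * (-1)^i)"
    have d: "?d \<noteq> 0" "cmod ?d \<ge> W m" using cmod_Wplus[of "W m" "t * (-1)^i"] Wm by auto
    have "fct W t i m - 1 = - (\<i> * complex_of_real (t * (-1)^i)) / ?d"
      unfolding fct_def using d by (simp add: field_simps)
    then have "cmod (fct W t i m - 1) = \<bar>t\<bar> / cmod ?d"
      using d by (simp add: norm_divide norm_mult abs_mult norm_power)
    also have "\<dots> \<le> \<bar>t\<bar> / W m" using d Wm by (intro divide_left_mono) auto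
    finally show ?thesis by simp
  qed
  have "summable (\<lambda>m. cmod (fct W t i m - 1))"
    by (rule summable_comparison_test[OF _ summable_mult[OF S, of "\<bar>t\<bar>"]]) (use b in auto)
  then show ?thesis
    by (intro abs_convergent_prod_imp_convergent_prod summable_imp_abs_convergent_prod)
qed

lemma psi_step:
  assumes W: "\<forall>m. W m > 0"
  shows "psi W t i x = fct W t i x * psi W t i (Suc x)"
proof -
  have nz: "(\<Prod>m<x. fct W t i m) \<noteq> 0" "fct W t i x \<noteq> 0"
    using fct_nz W by auto
  show ?thesis unfolding psi_def using nz by (simp add: field_simps)
qed

lemma psi_tendsto:
  assumes W: "\<forall>m. W m > 0" and S: "summable (\<lambda>m. 1 / W m)"
  shows "(\<lambda>x. psi W t i x) \<longlonglongrightarrow> 1"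
proof -
  have c: "convergent_prod (fct W t i)" by (rule fct_conv[OF W S])
  have P: "prodinf (fct W t i) \<noteq> 0" using prodinf_nonzero[OF c] fct_nz W by auto
  have L: "(\<lambda>n. \<Prod>m\<le>n. fct W t i m) \<longlonglongrightarrow> prodinf (fct W t i)"
    by (rule convergent_prod_LIMSEQ[OF c])
  have "(\<lambda>n. \<Prod>m<Suc n. fct W t i m) \<longlonglongrightarrow> prodinf (fct W t i)"
    using L by (simp add: lessThan_Suc_atMost)
  then have L2: "(\<lambda>n. \<Prod>m<n. fct W t i m) \<longlonglongrightarrow> prodinf (fct W t i)"
    by (rule LIMSEQ_imp_Suc)
  have "(\<lambda>x. prodinf (fct W t i) / (\<Prod>m<x. fct W t i m)) \<longlonglongrightarrow> prodinf (fct W t i) / prodinf (fct W t i)"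
    by (intro tendsto_divide tendsto_const L2 P)
  then show ?thesis using P unfolding psi_def by simp
qed

lemma psi_norm_le1:
  assumes W: "\<forall>m. W m > 0" and S: "summable (\<lambda>m. 1 / W m)"
  shows "cmod (psi W t i x) \<le> 1"
proof -
  have c: "convergent_prod (fct W t i)" by (rule fct_conv[OF W S])
  have L: "(\<lambda>n. \<Prod>m\<le>n. fct W t i m) \<longlonglongrightarrow> prodinf (fct W t i)"
    by (rule convergent_prod_LIMSEQ[OF c])
  have "(\<lambda>n. \<Prod>m<Suc n. fct W t i m) \<longlonglongrightarrow> prodinf (fct W t i)"
    using L by (simp add: lessThan_Suc_atMost)
  then have L2: "(\<lambda>n. \<Prod>m<n. fct W t i m) \<longlonglongrightarrow> prodinf (fct W t i)"
    by (rule LIMSEQ_imp_Suc)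
  have le: "(\<Prod>m<n. cmod (fct W t i m)) \<le> (\<Prod>m<x. cmod (fct W t i m))" if "x \<le> n" for n
    using that
  proof (induction n rule: dec_induct)
    case base then show ?case by simp
  next
    case (step n)
    have "(\<Prod>m<Suc n. cmod (fct W t i m)) = (\<Prod>m<n. cmod (fct W t i m)) * cmod (fct W t i n)"
      by simp
    also have "\<dots> \<le> (\<Prod>m<n. cmod (fct W t i m)) * 1"
      apply (rule mult_left_mono)
      using fct_norm_le1 W apply blast
      by (rule prod_nonneg) simp
    finally show ?case using step.IH by simp
  qed
  have ev: "\<forall>\<^sub>F n in sequentially. cmod (\<Prod>m<n. fct W t i m) \<le> (\<Prod>m<x. cmod (fct W t i m))"
    unfolding eventually_sequentially prod_norm[symmetric] using le by blast
  have "cmod (prodinf (fct W t i)) \<le> (\<Prod>m<x. cmod (fct W t i m))"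
    by (rule tendsto_upperbound[OF tendsto_norm[OF L2] ev]) simp
  moreover have "(\<Prod>m<x. cmod (fct W t i m)) > 0"
    using fct_nz W by (intro prod_pos) auto
  ultimately show ?thesis unfolding psi_def norm_divide prod_norm[symmetric] by simp
qed

lemma psi_norm_le_fct:
  assumes W: "\<forall>m. W m > 0" and S: "summable (\<lambda>m. 1 / W m)"
  shows "cmod (psi W t i x) \<le> cmod (fct W t i x)"
proof -
  have "cmod (psi W t i x) = cmod (fct W t i x) * cmod (psi W t i (Suc x))"
    using psi_step[OF W] norm_mult by metis
  also have "\<dots> \<le> cmod (fct W t i x) * 1"
    using psi_norm_le1[OF W S] by (intro mult_left_mono) auto
  finally show ?thesis by simp
qed



lemma Suc_mod_cases:
  assumes "w < l"
  shows "Suc w mod l = (if Suc w = l then 0 else Suc w)"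
proof (cases "Suc w = l")
  case True then show ?thesis by simp
next
  case False
  then have "Suc w < l" using assms by linarith
  then show ?thesis using False by simp
qed

lemma pred_mod:
  assumes "v < l" "w < l"
  shows "v = Suc w mod l \<longleftrightarrow> w = (v + l - 1) mod l"
proof (cases "v = 0")
  case True
  have "v + l - 1 = l - 1" using True by simp
  moreover have "l - 1 < l" using assms by simp
  ultimately have e: "(v + l - 1) mod l = l - 1" by (metis mod_less)
  have s: "Suc w mod l = (if Suc w = l then 0 else Suc w)" by (rule Suc_mod_cases[OF assms(2)])
  show ?thesis unfolding e s using True assms by (cases "Suc w = l") auto
next
  case False
  have "v + l - 1 = (v - 1) + l" using False by simp
  then have e: "(v + l - 1) mod l = v - 1" using assms by (metis mod_add_self2 mod_less less_imp_diff_less)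
  have s: "Suc w mod l = (if Suc w = l then 0 else Suc w)" by (rule Suc_mod_cases[OF assms(2)])
  show ?thesis unfolding e s using False assms by (cases "Suc w = l") auto
qed

lemma cyc_edge_inj:
  assumes "3 \<le> l" "i < l" "j < l" "cyc_edge l i = cyc_edge l j"
  shows "i = j"
proof (rule ccontr)
  assume ne: "i \<noteq> j"
  from assms(4) ne have 1: "i = Suc j mod l" "j = Suc i mod l"
    unfolding cyc_edge_def by (auto simp: doubleton_eq_iff)
  have a: "i = (if Suc j = l then 0 else Suc j)" using 1(1) Suc_mod_cases[OF assms(3)] by (rule trans)
  have b: "j = (if Suc i = l then 0 else Suc i)" using 1(2) Suc_mod_cases[OF assms(2)] by (rule trans)
  have a': "(Suc j = l \<and> i = 0) \<or> (Suc j \<noteq> l \<and> i = Suc j)" using a by (cases "Suc j = l") auto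
  have b': "(Suc i = l \<and> j = 0) \<or> (Suc i \<noteq> l \<and> j = Suc i)" using b by (cases "Suc i = l") auto
  from a' b' assms(1) show False by linarith
qed

lemma alg_core:
  fixes A B z :: complex
  assumes "A + B \<noteq> 0" "A - z \<noteq> 0" "B + z \<noteq> 0"
  shows "B / (B + A) * (A / (A - z)) + A / (B + A) * (B / (B + z)) = A / (A - z) * (B / (B + z))"
proof -
  have BA: "B + A \<noteq> 0" using assms by (simp add: add.commute)
  have "B / (B + A) * (A / (A - z)) + A / (B + A) * (B / (B + z))
      = (A * B * ((B + z) + (A - z))) / ((B + A) * (A - z) * (B + z))"
    using assms BA by (simp add: divide_simps) (simp add: algebra_simps)
  also have "(B + z) + (A - z) = B + A" by simp
  also have "(A * B * (B + A)) / ((B + A) * (A - z) * (B + z)) = A / (A - z) * (B / (B + z))"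
    using BA by simp
  finally show ?thesis .
qed

lemma one_step:
  assumes W: "\<forall>m. W m > 0" and S: "summable (\<lambda>m. 1 / W m)"
    and ev: "even l" and l4: "4 \<le> l" and vl: "v < l"
  shows "(\<Sum>w<l. (\<Prod>i<l. psi W t i (c i + (if {v,w} = cyc_edge l i then 1 else 0))) *
            complex_of_real (if cyc_adj l v w then W (c (edge_idx l v w)) /
               (\<Sum>u\<in>{u. cyc_adj l v u}. W (c (edge_idx l v u))) else 0))
         = (\<Prod>i<l. psi W t i (c i))"
proof -
  define p where "p = (v + l - 1) mod l"
  define r where "r = Suc v mod l"
  have l0: "0 < l" using l4 by simp
  have pl: "p < l" unfolding p_def using l0 by simp
  have rl: "r < l" unfolding r_def using l0 by simp
  have vp: "v = Suc p mod l" using pred_mod[OF vl pl] unfolding p_def by simp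
  have r_eq: "r = (if Suc v = l then 0 else Suc v)" unfolding r_def by (rule Suc_mod_cases[OF vl])
  have v_eq: "v = (if Suc p = l then 0 else Suc p)" using vp Suc_mod_cases[OF pl] by (rule trans)
  have aV: "(Suc p = l \<and> v = 0) \<or> (Suc p \<noteq> l \<and> v = Suc p)"
    using v_eq by (cases "Suc p = l") auto
  have bR: "(Suc v = l \<and> r = 0) \<or> (Suc v \<noteq> l \<and> r = Suc v)"
    using r_eq by (cases "Suc v = l") auto
  have rp: "r \<noteq> p" using aV bR l4 by linarith
  have pv: "p \<noteq> v" using aV l4 by linarith
  have rv: "r \<noteq> v" using bR l4 by linarith
  have adj: "cyc_adj l v w \<longleftrightarrow> w = r \<or> w = p" for w
  proof
    assume "cyc_adj l v w"
    then have "w < l" "w = r \<or> v = Suc w mod l" unfolding cyc_adj_def r_def by auto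
    then show "w = r \<or> w = p" using pred_mod[OF vl] unfolding p_def by blast
  next
    assume "w = r \<or> w = p"
    then show "cyc_adj l v w" unfolding cyc_adj_def using vl rl pl vp r_def by blast
  qed
  have adjset: "{u. cyc_adj l v u} = {r, p}" using adj by auto
  have ei_r: "edge_idx l v r = v" unfolding edge_idx_def r_def by simp
  have ei_p: "edge_idx l v p = p" unfolding edge_idx_def using rp r_def by auto
  have ce_v: "cyc_edge l v = {v, r}" unfolding cyc_edge_def r_def by simp
  have ce_p: "cyc_edge l p = {v, p}" unfolding cyc_edge_def vp[symmetric] by (simp add: insert_commute)
  have l3: "3 \<le> l" using l4 by simp
  have er: "{v, r} = cyc_edge l i \<longleftrightarrow> i = v" if "i < l" for i
    using cyc_edge_inj[OF l3 vl that] ce_v by auto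
  have ep: "{v, p} = cyc_edge l i \<longleftrightarrow> i = p" if "i < l" for i
    using cyc_edge_inj[OF l3 pl that] ce_p by auto
  define A where "A = W (c p)"
  define B where "B = W (c v)"
  have A0: "A > 0" and B0: "B > 0" using W unfolding A_def B_def by auto
  have den: "(\<Sum>u\<in>{u. cyc_adj l v u}. W (c (edge_idx l v u))) = B + A"
    unfolding adjset using rp ei_r ei_p A_def B_def by simp
  define F where "F w = (\<Prod>i<l. psi W t i (c i + (if {v,w} = cyc_edge l i then 1 else 0))) *
            complex_of_real (if cyc_adj l v w then W (c (edge_idx l v w)) /
               (\<Sum>u\<in>{u. cyc_adj l v u}. W (c (edge_idx l v u))) else 0)" for w
  have "(\<Sum>w<l. F w) = (\<Sum>w\<in>{r,p}. F w)"
    by (rule sum.mono_neutral_right) (use rl pl adj in \<open>auto simp: F_def\<close>)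
  also have "\<dots> = F r + F p" using rp by simp
  finally have sumF: "(\<Sum>w<l. F w) = F r + F p" .
  define Rst where "Rst = {..<l} - {v, p}"
  have dec: "{..<l} = insert v (insert p Rst)" unfolding Rst_def using vl pl by auto
  have splitp: "(\<Prod>i<l. g i) = g v * g p * (\<Prod>i\<in>Rst. g i)" for g :: "nat \<Rightarrow> complex"
  proof -
    have "finite Rst" unfolding Rst_def by simp
    moreover have "v \<notin> insert p Rst" "p \<notin> Rst" using pv unfolding Rst_def by auto
    ultimately show ?thesis unfolding dec by (simp add: mult.assoc)
  qed
  define R where "R = (\<Prod>i\<in>Rst. psi W t i (c i))"
  have Rr: "(\<Prod>i\<in>Rst. psi W t i (c i + (if {v,r} = cyc_edge l i then 1 else 0))) = R"
    unfolding R_def by (rule prod.cong) (use er in \<open>auto simp: Rst_def\<close>)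
  have Rp: "(\<Prod>i\<in>Rst. psi W t i (c i + (if {v,p} = cyc_edge l i then 1 else 0))) = R"
    unfolding R_def by (rule prod.cong) (use ep in \<open>auto simp: Rst_def\<close>)
  define Y1 where "Y1 = psi W t v (Suc (c v))"
  define Y2 where "Y2 = psi W t p (Suc (c p))"
  define z where "z = \<i> * complex_of_real (t * (-1)^v)"
  have sgn: "(-1::real)^p = - ((-1)^v)"
  proof (cases "v = 0")
    case True
    then have "p = l - 1" unfolding p_def using l0 by simp
    moreover have "odd (l - 1)" using ev l0 by simp
    ultimately show ?thesis using True by simp
  next
    case False
    have "v + l - 1 = (v - 1) + l" using False by simp
    then have "p = v - 1" unfolding p_def using vl
      by (metis mod_add_self2 mod_less less_imp_diff_less)
    moreover have "v = Suc (v - 1)" using False by simp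
    ultimately show ?thesis by (metis power_Suc mult_minus1 minus_minus)
  qed
  have fv: "fct W t v (c v) = complex_of_real B / (complex_of_real B + z)"
    unfolding fct_def B_def z_def by simp
  have fp: "fct W t p (c p) = complex_of_real A / (complex_of_real A - z)"
    unfolding fct_def A_def z_def sgn by simp
  have psv: "psi W t v (c v) = fct W t v (c v) * Y1" unfolding Y1_def by (rule psi_step[OF W])
  have psp: "psi W t p (c p) = fct W t p (c p) * Y2" unfolding Y2_def by (rule psi_step[OF W])
  have nzA: "complex_of_real A - z \<noteq> 0"
  proof -
    have "complex_of_real A - z = complex_of_real A + \<i> * complex_of_real (- (t * (-1)^v))"
      unfolding z_def by simp
    then show ?thesis using cmod_Wplus(3)[OF A0] by metis
  qed
  have nzB: "complex_of_real B + z \<noteq> 0" unfolding z_def using cmod_Wplus(3)[OF B0] by metis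
  have nzAB: "complex_of_real A + complex_of_real B \<noteq> 0"
  proof -
    have "A + B > 0" using A0 B0 by simp
    then show ?thesis by (metis of_real_add of_real_eq_0_iff less_irrefl)
  qed
  have tr_r: "(if cyc_adj l v r then W (c (edge_idx l v r)) /
               (\<Sum>u\<in>{u. cyc_adj l v u}. W (c (edge_idx l v u))) else 0) = B / (B + A)"
    unfolding den using adj ei_r unfolding B_def by simp
  have tr_p: "(if cyc_adj l v p then W (c (edge_idx l v p)) /
               (\<Sum>u\<in>{u. cyc_adj l v u}. W (c (edge_idx l v u))) else 0) = A / (B + A)"
    unfolding den using adj ei_p unfolding A_def by simp
  define tv where "tv = complex_of_real B / (complex_of_real B + complex_of_real A)"
  define tp where "tp = complex_of_real A / (complex_of_real B + complex_of_real A)"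
  have prr: "(\<Prod>i<l. psi W t i (c i + (if {v,r} = cyc_edge l i then 1 else 0))) = Y1 * (fct W t p (c p) * Y2) * R"
    unfolding splitp Rr using er[OF vl] er[OF pl] pv by (simp add: psp Y1_def)
  have prp: "(\<Prod>i<l. psi W t i (c i + (if {v,p} = cyc_edge l i then 1 else 0))) = (fct W t v (c v) * Y1) * Y2 * R"
    unfolding splitp Rp using ep[OF vl] ep[OF pl] pv by (simp add: psv Y2_def)
  have Fr: "F r = Y1 * (fct W t p (c p) * Y2) * R * tv"
    unfolding F_def tr_r prr tv_def by simp
  have Fp: "F p = (fct W t v (c v) * Y1) * Y2 * R * tp"
    unfolding F_def tr_p prp tp_def by simp
  have rhs: "(\<Prod>i<l. psi W t i (c i)) = (fct W t v (c v) * Y1) * (fct W t p (c p) * Y2) * R"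
    unfolding splitp R_def psv psp by simp
  have core: "tv * fct W t p (c p) + tp * fct W t v (c v) = fct W t v (c v) * fct W t p (c p)"
    unfolding tv_def tp_def fv fp using alg_core[OF nzAB nzA nzB] by (simp add: mult.commute)
  have comb: "y1 * (fp' * y2) * rr * tv' + (fv' * y1) * y2 * rr * tp' = (fv' * y1) * (fp' * y2) * rr"
    if "tv' * fp' + tp' * fv' = fv' * fp'" for y1 y2 rr tv' tp' fv' fp' :: complex
  proof -
    have "y1 * (fp' * y2) * rr * tv' + (fv' * y1) * y2 * rr * tp' = y1 * y2 * rr * (tv' * fp' + tp' * fv')"
      by (simp add: algebra_simps)
    also have "\<dots> = (fv' * y1) * (fp' * y2) * rr" unfolding that by (simp add: algebra_simps)
    finally show ?thesis .
  qed
  have "F r + F p = (fct W t v (c v) * Y1) * (fct W t p (c p) * Y2) * R"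
    unfolding Fr Fp by (rule comb[OF core])
  then have fin: "(\<Sum>w<l. F w) = (\<Prod>i<l. psi W t i (c i))" using sumF rhs by simp
  show ?thesis using fin by (simp only: F_def)
qed



definition Gf :: "(nat \<Rightarrow> real) \<Rightarrow> (nat \<Rightarrow> nat) \<Rightarrow> nat \<Rightarrow> real \<Rightarrow> nat \<Rightarrow> (nat \<Rightarrow> nat) \<Rightarrow> complex" where
  "Gf W X0 l t n h = (\<Prod>i<l. psi W t i (errw_count X0 l h n i))"

lemma errw_count_0: "errw_count X0 l h 0 i = X0 i"
  unfolding errw_count_def by simp

lemma errw_count_cong:
  assumes "\<And>j. j \<le> n \<Longrightarrow> h j = g j"
  shows "errw_count X0 l h n i = errw_count X0 l g n i"
proof -
  have "{j. j < n \<and> {h j, h (Suc j)} = cyc_edge l i} = {j. j < n \<and> {g j, g (Suc j)} = cyc_edge l i}"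
    using assms by (auto simp: Suc_le_eq)
  then show ?thesis unfolding errw_count_def by simp
qed

lemma errw_count_Suc:
  "errw_count X0 l h (Suc n) i = errw_count X0 l h n i + (if {h n, h (Suc n)} = cyc_edge l i then 1 else 0)"
proof -
  let ?Q = "\<lambda>j. {h j, h (Suc j)} = cyc_edge l i"
  have "{j. j < Suc n \<and> ?Q j} = (if ?Q n then insert n {j. j < n \<and> ?Q j} else {j. j < n \<and> ?Q j})"
    by (auto simp: less_Suc_eq)
  moreover have "finite {j. j < n \<and> ?Q j}" by simp
  moreover have "n \<notin> {j. j < n \<and> ?Q j}" by simp
  ultimately show ?thesis unfolding errw_count_def by (simp add: card_insert_if)
qed

lemma errw_trans_cong:
  assumes "\<And>j. j \<le> n \<Longrightarrow> h j = g j"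
  shows "errw_trans W X0 l h n w = errw_trans W X0 l g n w"
proof -
  have hn: "h n = g n" using assms by simp
  have c: "errw_count X0 l h n i = errw_count X0 l g n i" for i by (rule errw_count_cong[OF assms])
  show ?thesis unfolding errw_trans_def hn c ..
qed

lemma Gf_cong:
  assumes "\<And>j. j \<le> n \<Longrightarrow> h j = g j"
  shows "Gf W X0 l t n h = Gf W X0 l t n g"
  unfolding Gf_def using errw_count_cong[OF assms] by simp

lemma Gf_upd:
  "Gf W X0 l t (Suc n) (h(Suc n := w)) =
     (\<Prod>i<l. psi W t i (errw_count X0 l h n i + (if {h n, w} = cyc_edge l i then 1 else 0)))"
proof -
  have "errw_count X0 l (h(Suc n := w)) (Suc n) i = errw_count X0 l h n i + (if {h n, w} = cyc_edge l i then 1 else 0)" for i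
  proof -
    have "errw_count X0 l (h(Suc n := w)) n i = errw_count X0 l h n i"
      by (rule errw_count_cong) simp
    then show ?thesis unfolding errw_count_Suc by simp
  qed
  then show ?thesis unfolding Gf_def by simp
qed

lemma Gf_step:
  assumes W: "\<forall>m. W m > 0" and S: "summable (\<lambda>m. 1 / W m)" and k2: "2 \<le> k" and hn: "h n < 2 * k"
  shows "(\<Sum>w<2*k. Gf W X0 (2*k) t (Suc n) (h(Suc n := w)) * complex_of_real (errw_trans W X0 (2*k) h n w))
         = Gf W X0 (2*k) t n h"
  unfolding Gf_upd unfolding errw_trans_def Gf_def
  by (rule one_step[OF W S _ _ hn]) (use k2 in auto)



lemma card_lim:
  fixes g :: "nat \<Rightarrow> complex"
  assumes g: "g \<longlonglongrightarrow> 1"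
  shows "(\<lambda>n. g (x0 + card {j. j < n \<and> Q j})) \<longlonglongrightarrow>
           (if infinite {j. Q j} then 1 else g (x0 + card {j. Q j}))"
proof (cases "finite {j. Q j}")
  case True
  then obtain N where N: "{j. Q j} \<subseteq> {..<N}" using finite_nat_bounded by blast
  have "eventually (\<lambda>n. g (x0 + card {j. j < n \<and> Q j}) = g (x0 + card {j. Q j})) sequentially"
    unfolding eventually_sequentially
  proof (intro exI allI impI)
    fix n assume "N \<le> n"
    then have "{j. j < n \<and> Q j} = {j. Q j}" using N by auto
    then show "g (x0 + card {j. j < n \<and> Q j}) = g (x0 + card {j. Q j})" by simp
  qed
  then show ?thesis using True by (simp add: tendsto_eventually)
next
  case False
  have lim: "filterlim (\<lambda>n. x0 + card {j. j < n \<and> Q j}) at_top sequentially"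
    unfolding filterlim_at_top
  proof
    fix Z :: nat
    obtain B where B: "finite B" "card B = Z" "B \<subseteq> {j. Q j}"
      using infinite_arbitrarily_large[OF False] by blast
    obtain N where N: "B \<subseteq> {..<N}" using finite_nat_bounded[OF B(1)] by blast
    show "eventually (\<lambda>n. Z \<le> x0 + card {j. j < n \<and> Q j}) sequentially"
      unfolding eventually_sequentially
    proof (intro exI allI impI)
      fix n assume "N \<le> n"
      then have "B \<subseteq> {j. j < n \<and> Q j}" using N B(3) by auto
      then have "card B \<le> card {j. j < n \<and> Q j}" by (intro card_mono) auto
      then show "Z \<le> x0 + card {j. j < n \<and> Q j}" using B(2) by simp
    qed
  qed
  have "(\<lambda>n. g (x0 + card {j. j < n \<and> Q j})) \<longlonglongrightarrow> 1"
    by (rule filterlim_compose[OF g lim])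
  then show ?thesis using False by simp
qed

locale errw_ctx =
  fixes M :: "'a measure" and I :: "nat \<Rightarrow> 'a \<Rightarrow> nat"
    and W :: "nat \<Rightarrow> real" and X0 :: "nat \<Rightarrow> nat" and k v0 :: nat
  assumes P: "prob_space M"
    and k2: "k \<ge> 2"
    and Wp: "\<forall>m. W m > 0"
    and Ws: "summable (\<lambda>m. 1 / W m)"
    and v0l: "v0 < 2 * k"
    and Im: "\<forall>n. I n \<in> measurable M (count_space UNIV)"
    and I0: "AE \<omega> in M. I 0 \<omega> = v0"
    and tr: "\<forall>n h w. measure M {\<omega>\<in>space M. (\<forall>j\<le>n. I j \<omega> = h j) \<and> I (Suc n) \<omega> = w}
               = errw_trans W X0 (2 * k) h n w * measure M {\<omega>\<in>space M. \<forall>j\<le>n. I j \<omega> = h j}"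
begin

sublocale prob_space M by (rule P)

abbreviation "l \<equiv> 2 * k"

definition Cy :: "nat \<Rightarrow> (nat \<Rightarrow> nat) \<Rightarrow> 'a set" where
  "Cy n h = {\<omega>\<in>space M. \<forall>j\<le>n. I j \<omega> = h j}"

lemma Im' [measurable]: "I n \<in> M \<rightarrow>\<^sub>M count_space UNIV"
  using Im by auto

lemma Cy_sets [measurable]: "Cy n h \<in> sets M"
  unfolding Cy_def by measurable

lemma Cy2_sets: "{\<omega>\<in>space M. (\<forall>j\<le>n. I j \<omega> = h j) \<and> I (Suc n) \<omega> = w} \<in> sets M"
proof -
  have "{\<omega>\<in>space M. (\<forall>j\<le>n. I j \<omega> = h j) \<and> I (Suc n) \<omega> = w} = Cy n h \<inter> (I (Suc n) -` {w} \<inter> space M)"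
    unfolding Cy_def by auto
  also have "\<dots> \<in> sets M" using measurable_sets[OF Im'] by auto
  finally show ?thesis .
qed

lemma valid_step: "AE \<omega> in M. I (Suc n) \<omega> < l"
proof -
  have "AE \<omega> in M. \<forall>w. l \<le> w \<longrightarrow> I (Suc n) \<omega> \<noteq> w"
  proof (subst AE_all_countable, intro allI)
    fix w :: nat
    show "AE \<omega> in M. l \<le> w \<longrightarrow> I (Suc n) \<omega> \<noteq> w"
    proof (cases "l \<le> w")
      case False then show ?thesis by simp
    next
      case True
      let ?H = "Pi\<^sub>E {..n} (\<lambda>_. UNIV :: nat set)"
      let ?N = "\<Union>h\<in>?H. {\<omega>\<in>space M. (\<forall>j\<le>n. I j \<omega> = h j) \<and> I (Suc n) \<omega> = w}"
      have cH: "countable ?H" by (intro countable_PiE) auto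
      have null: "{\<omega>\<in>space M. (\<forall>j\<le>n. I j \<omega> = h j) \<and> I (Suc n) \<omega> = w} \<in> null_sets M" for h
      proof -
        have "errw_trans W X0 l h n w = 0" unfolding errw_trans_def cyc_adj_def using True by simp
        then have "measure M {\<omega>\<in>space M. (\<forall>j\<le>n. I j \<omega> = h j) \<and> I (Suc n) \<omega> = w} = 0"
          using tr by simp
        then show ?thesis using Cy2_sets by (auto simp: null_sets_def emeasure_eq_measure)
      qed
      have "?N \<in> null_sets M" using cH null by (intro null_sets_UN') auto
      moreover have "{\<omega>\<in>space M. \<not> (l \<le> w \<longrightarrow> I (Suc n) \<omega> \<noteq> w)} \<subseteq> ?N"
      proof
        fix \<omega> assume a: "\<omega> \<in> {\<omega>\<in>space M. \<not> (l \<le> w \<longrightarrow> I (Suc n) \<omega> \<noteq> w)}"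
        let ?h = "restrict (\<lambda>j. I j \<omega>) {..n}"
        have "?h \<in> ?H" by simp
        moreover have "\<omega> \<in> {\<omega>'\<in>space M. (\<forall>j\<le>n. I j \<omega>' = ?h j) \<and> I (Suc n) \<omega>' = w}" using a by auto
        ultimately show "\<omega> \<in> ?N" by blast
      qed
      ultimately show ?thesis by (rule AE_I')
    qed
  qed
  then show ?thesis by eventually_elim (metis not_le order_refl)
qed

lemma valid: "AE \<omega> in M. \<forall>j. I j \<omega> < l"
proof (subst AE_all_countable, intro allI)
  fix j show "AE \<omega> in M. I j \<omega> < l"
  proof (cases j)
    case 0
    have "AE \<omega> in M. I 0 \<omega> < l" using I0 by eventually_elim (simp add: v0l)
    then show ?thesis using 0 by simp
  next
    case (Suc m) then show ?thesis using valid_step by simp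
  qed
qed

definition Paths :: "nat \<Rightarrow> (nat \<Rightarrow> nat) set" where
  "Paths n = Pi\<^sub>E {..n} (\<lambda>_. {..<l})"

definition Sm :: "real \<Rightarrow> nat \<Rightarrow> complex" where
  "Sm t n = (\<Sum>h\<in>Paths n. Gf W X0 l t n h * complex_of_real (measure M (Cy n h)))"

lemma finite_Paths: "finite (Paths n)"
  unfolding Paths_def by (intro finite_PiE) auto

lemma measure_Cy_Suc:
  "measure M (Cy (Suc n) (g(Suc n := y))) = errw_trans W X0 l g n y * measure M (Cy n g)"
proof -
  have e1: "Cy (Suc n) (g(Suc n := y)) = {\<omega>\<in>space M. (\<forall>j\<le>n. I j \<omega> = (g(Suc n := y)) j) \<and> I (Suc n) \<omega> = y}"
    unfolding Cy_def by (auto simp: le_Suc_eq)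
  have e2: "{\<omega>\<in>space M. \<forall>j\<le>n. I j \<omega> = (g(Suc n := y)) j} = Cy n g"
    unfolding Cy_def by auto
  have e3: "errw_trans W X0 l (g(Suc n := y)) n y = errw_trans W X0 l g n y"
    by (rule errw_trans_cong) simp
  show ?thesis unfolding e1 using tr e2 e3 by metis
qed

lemma Sm_Suc: "Sm t (Suc n) = Sm t n"
proof -
  define F where "F h = Gf W X0 l t (Suc n) h * complex_of_real (measure M (Cy (Suc n) h))" for h
  have P: "Paths (Suc n) = (\<lambda>(y, g). g(Suc n := y)) ` ({..<l} \<times> Paths n)"
    unfolding Paths_def atMost_Suc by (rule PiE_insert_eq)
  have inj: "inj_on (\<lambda>(y, g). g(Suc n := y)) ({..<l} \<times> Paths n)"
    unfolding Paths_def by (rule inj_combinator) simp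
  have "Sm t (Suc n) = (\<Sum>h\<in>Paths (Suc n). F h)" unfolding Sm_def F_def ..
  also have "\<dots> = (\<Sum>x\<in>{..<l} \<times> Paths n. F ((\<lambda>(y, g). g(Suc n := y)) x))"
    unfolding P by (rule sum.reindex[OF inj, unfolded comp_def])
  also have "\<dots> = (\<Sum>y<l. \<Sum>g\<in>Paths n. F (g(Suc n := y)))"
    by (subst sum.cartesian_product) (simp add: case_prod_unfold)
  also have "\<dots> = (\<Sum>g\<in>Paths n. \<Sum>y<l. F (g(Suc n := y)))"
    by (rule sum.swap)
  also have "\<dots> = (\<Sum>g\<in>Paths n. Gf W X0 l t n g * complex_of_real (measure M (Cy n g)))"
  proof (rule sum.cong[OF refl])
    fix g assume g: "g \<in> Paths n"
    then have gn: "g n < l" unfolding Paths_def by auto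
    have "(\<Sum>y<l. F (g(Suc n := y))) =
          (\<Sum>y<l. Gf W X0 l t (Suc n) (g(Suc n := y)) * complex_of_real (errw_trans W X0 l g n y)) *
          complex_of_real (measure M (Cy n g))"
      unfolding F_def measure_Cy_Suc sum_distrib_right by (simp add: mult.assoc)
    also have "\<dots> = Gf W X0 l t n g * complex_of_real (measure M (Cy n g))"
      using Gf_step[OF Wp Ws k2, of g n] gn by simp
    finally show "(\<Sum>y<l. F (g(Suc n := y))) = Gf W X0 l t n g * complex_of_real (measure M (Cy n g))" .
  qed
  also have "\<dots> = Sm t n" unfolding Sm_def ..
  finally show ?thesis .
qed

definition Rn :: "real \<Rightarrow> nat \<Rightarrow> 'a \<Rightarrow> real" where
  "Rn t n \<omega> = Re (Gf W X0 l t n (\<lambda>j. I j \<omega>))"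

lemma restr_meas: "(\<lambda>\<omega>. restrict (\<lambda>j. I j \<omega>) {..n}) \<in> measurable M (count_space (Pi\<^sub>E {..n} (\<lambda>_. UNIV)))"
proof (subst measurable_count_space_eq_countable)
  show "countable (Pi\<^sub>E {..n} (\<lambda>_. UNIV :: nat set))" by (intro countable_PiE) auto
  show "(\<lambda>\<omega>. restrict (\<lambda>j. I j \<omega>) {..n}) \<in> space M \<rightarrow> Pi\<^sub>E {..n} (\<lambda>_. UNIV) \<and>
    (\<forall>a\<in>Pi\<^sub>E {..n} (\<lambda>_. UNIV). (\<lambda>\<omega>. restrict (\<lambda>j. I j \<omega>) {..n}) -` {a} \<inter> space M \<in> sets M)"
  proof (intro conjI ballI)
    show "(\<lambda>\<omega>. restrict (\<lambda>j. I j \<omega>) {..n}) \<in> space M \<rightarrow> Pi\<^sub>E {..n} (\<lambda>_. UNIV)" by auto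
    fix a :: "nat \<Rightarrow> nat" assume a: "a \<in> Pi\<^sub>E {..n} (\<lambda>_. UNIV)"
    have "(\<lambda>\<omega>. restrict (\<lambda>j. I j \<omega>) {..n}) -` {a} \<inter> space M = Cy n a"
    proof (intro set_eqI iffI)
      fix \<omega> assume "\<omega> \<in> (\<lambda>\<omega>. restrict (\<lambda>j. I j \<omega>) {..n}) -` {a} \<inter> space M"
      then show "\<omega> \<in> Cy n a" unfolding Cy_def by auto
    next
      fix \<omega> assume w: "\<omega> \<in> Cy n a"
      have "restrict (\<lambda>j. I j \<omega>) {..n} = a"
      proof
        fix j show "restrict (\<lambda>j. I j \<omega>) {..n} j = a j"
          using w a unfolding Cy_def by (cases "j \<le> n") (auto simp: PiE_def extensional_def)
      qed
      then show "\<omega> \<in> (\<lambda>\<omega>. restrict (\<lambda>j. I j \<omega>) {..n}) -` {a} \<inter> space M"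
        using w unfolding Cy_def by auto
    qed
    then show "(\<lambda>\<omega>. restrict (\<lambda>j. I j \<omega>) {..n}) -` {a} \<inter> space M \<in> sets M" by simp
  qed
qed

lemma Rn_meas [measurable]: "Rn t n \<in> borel_measurable M"
proof -
  have e: "Rn t n = (\<lambda>h. Re (Gf W X0 l t n h)) \<circ> (\<lambda>\<omega>. restrict (\<lambda>j. I j \<omega>) {..n})"
    unfolding Rn_def comp_def by (intro ext arg_cong[where f=Re] Gf_cong) simp
  show ?thesis unfolding e
    by (rule measurable_comp[OF restr_meas]) simp
qed

lemma Gf_norm_le1: "cmod (Gf W X0 l t n h) \<le> 1"
  unfolding Gf_def prod_norm[symmetric] by (intro prod_le_1) (use psi_norm_le1[OF Wp Ws] in auto)

lemma Rn_bound: "\<bar>Rn t n \<omega>\<bar> \<le> 1"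
  unfolding Rn_def using abs_Re_le_cmod Gf_norm_le1 order_trans by blast

lemma Rn_AE: "AE \<omega> in M. Rn t n \<omega> = (\<Sum>h\<in>Paths n. Re (Gf W X0 l t n h) * indicator (Cy n h) \<omega>)"
  using valid AE_space
proof eventually_elim
  case (elim \<omega>)
  show ?case
  proof -
    have True: "\<omega> \<in> space M" using elim by simp
    define h0 where "h0 = restrict (\<lambda>j. I j \<omega>) {..n}"
    have h0P: "h0 \<in> Paths n" unfolding h0_def Paths_def using elim by auto
    have ind: "indicator (Cy n h) \<omega> = (if h = h0 then 1 else (0::real))" if "h \<in> Paths n" for h
    proof -
      have "\<omega> \<in> Cy n h \<longleftrightarrow> h = h0"
      proof
        assume "\<omega> \<in> Cy n h"
        then show "h = h0" using that unfolding Cy_def h0_def Paths_def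
          by (intro ext) (auto simp: PiE_def extensional_def)
      next
        assume "h = h0" then show "\<omega> \<in> Cy n h" using True unfolding Cy_def h0_def by auto
      qed
      then show ?thesis by (simp add: indicator_def)
    qed
    have "(\<Sum>h\<in>Paths n. Re (Gf W X0 l t n h) * indicator (Cy n h) \<omega>)
        = (\<Sum>h\<in>Paths n. if h = h0 then Re (Gf W X0 l t n h) else 0)"
      by (rule sum.cong) (auto simp: ind)
    also have "\<dots> = Re (Gf W X0 l t n h0)" using h0P finite_Paths by simp
    also have "\<dots> = Rn t n \<omega>" unfolding Rn_def h0_def
      by (intro arg_cong[where f=Re] Gf_cong) simp
    finally show ?thesis by simp
  qed
qed

lemma int_Rn: "integral\<^sup>L M (Rn t n) = Re (Sm t n)"
proof -
  have "integral\<^sup>L M (Rn t n) = integral\<^sup>L M (\<lambda>\<omega>. \<Sum>h\<in>Paths n. Re (Gf W X0 l t n h) * indicator (Cy n h) \<omega>)"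
    by (rule integral_cong_AE) (use Rn_AE in auto)
  also have "\<dots> = (\<Sum>h\<in>Paths n. integral\<^sup>L M (\<lambda>\<omega>. Re (Gf W X0 l t n h) * indicator (Cy n h) \<omega>))"
  proof -
    have integ: "integrable M (\<lambda>\<omega>. Re (Gf W X0 l t n h) * indicator (Cy n h) \<omega>)" for h
      by (intro integrable_mult_right integrable_real_indicator Cy_sets) (simp add: less_top[symmetric])
    show ?thesis
      by (rule Bochner_Integration.integral_sum[where I="Paths n" and f="\<lambda>h \<omega>. Re (Gf W X0 l t n h) * indicator (Cy n h) \<omega>"]) (rule integ)
  qed
  also have "\<dots> = (\<Sum>h\<in>Paths n. Re (Gf W X0 l t n h) * measure M (Cy n h))"
  proof (rule sum.cong[OF refl])
    fix h
    have "Cy n h \<inter> space M = Cy n h" unfolding Cy_def by auto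
    then show "integral\<^sup>L M (\<lambda>\<omega>. Re (Gf W X0 l t n h) * indicator (Cy n h) \<omega>) = Re (Gf W X0 l t n h) * measure M (Cy n h)"
      by simp
  qed
  also have "\<dots> = Re (Sm t n)" unfolding Sm_def Re_sum by simp
  finally show ?thesis .
qed

definition Qs :: "nat \<Rightarrow> 'a \<Rightarrow> nat set" where
  "Qs i \<omega> = {j. {I j \<omega>, I (Suc j) \<omega>} = cyc_edge l i}"

definition Linf :: "real \<Rightarrow> 'a \<Rightarrow> complex" where
  "Linf t \<omega> = (\<Prod>i<l. if infinite (Qs i \<omega>) then 1 else psi W t i (X0 i + card (Qs i \<omega>)))"

lemma Gf_lim: "(\<lambda>n. Gf W X0 l t n (\<lambda>j. I j \<omega>)) \<longlonglongrightarrow> Linf t \<omega>"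
  unfolding Gf_def Linf_def errw_count_def Qs_def
  by (intro tendsto_prod card_lim psi_tendsto[OF Wp Ws])

lemma Rn_lim: "(\<lambda>n. Rn t n \<omega>) \<longlonglongrightarrow> Re (Linf t \<omega>)"
  unfolding Rn_def by (intro tendsto_Re Gf_lim)

lemma Linf_meas [measurable]: "(\<lambda>\<omega>. Re (Linf t \<omega>)) \<in> borel_measurable M"
  by (rule borel_measurable_LIMSEQ_real[OF Rn_lim Rn_meas])

lemma Linf_bound: "\<bar>Re (Linf t \<omega>)\<bar> \<le> 1"
proof -
  have "\<bar>Rn t n \<omega>\<bar> \<le> 1" for n by (rule Rn_bound)
  then show ?thesis
    by (intro tendsto_upperbound[OF tendsto_rabs[OF Rn_lim]]) (auto)
qed

definition y0 :: "real \<Rightarrow> complex" where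
  "y0 t = (\<Prod>i<l. psi W t i (X0 i))"

lemma int_Rn_const: "integral\<^sup>L M (Rn t n) = Re (y0 t)"
proof -
  have "Sm t n = Sm t 0" by (induction n) (simp_all add: Sm_Suc)
  then have "integral\<^sup>L M (Rn t n) = integral\<^sup>L M (Rn t 0)" by (simp add: int_Rn)
  also have "Rn t 0 = (\<lambda>\<omega>. Re (y0 t))" unfolding Rn_def Gf_def y0_def errw_count_0 ..
  also have "integral\<^sup>L M (\<lambda>\<omega>. Re (y0 t)) = Re (y0 t)" by (simp add: prob_space)
  finally show ?thesis .
qed

lemma int_Linf: "integral\<^sup>L M (\<lambda>\<omega>. Re (Linf t \<omega>)) = Re (y0 t)"
proof -
  have "(\<lambda>n. integral\<^sup>L M (Rn t n)) \<longlonglongrightarrow> integral\<^sup>L M (\<lambda>\<omega>. Re (Linf t \<omega>))"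
    by (rule integral_dominated_convergence[where w="\<lambda>_. 1"])
       (auto simp: Rn_bound intro: Rn_lim)
  then show ?thesis unfolding int_Rn_const by (simp add: LIMSEQ_const_iff)
qed

definition Einf :: "'a set" where
  "Einf = {\<omega>. \<forall>i<l. infinite (Qs i \<omega>)}"

lemma factor_le1: "cmod (if infinite (Qs i \<omega>) then 1 else psi W t i (X0 i + card (Qs i \<omega>))) \<le> 1"
  using psi_norm_le1[OF Wp Ws] by simp

lemma Linf_lim: "(\<lambda>N. Re (Linf (real N) \<omega>)) \<longlonglongrightarrow> indicator Einf \<omega>"
proof (cases "\<omega> \<in> Einf")
  case True
  then have "Linf (real N) \<omega> = 1" for N unfolding Linf_def Einf_def by simp
  then show ?thesis using True by simp
next
  case False
  then obtain i where il: "i < l" and fin: "finite (Qs i \<omega>)" unfolding Einf_def by auto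
  define x where "x = X0 i + card (Qs i \<omega>)"
  define fa where "fa t j = (if infinite (Qs j \<omega>) then 1 else psi W t j (X0 j + card (Qs j \<omega>)))" for t j
  have bnd: "norm (Re (Linf (real N) \<omega>)) \<le> W x / real N" if N: "N \<ge> 1" for N
  proof -
    have "norm (Re (Linf (real N) \<omega>)) \<le> cmod (Linf (real N) \<omega>)" by (simp add: abs_Re_le_cmod)
    also have "cmod (Linf (real N) \<omega>) = (\<Prod>j<l. cmod (fa (real N) j))"
      unfolding Linf_def fa_def prod_norm ..
    also have "\<dots> = cmod (fa (real N) i) * (\<Prod>j\<in>{..<l} - {i}. cmod (fa (real N) j))"
      using il by (subst prod.remove[of _ i]) auto
    also have "\<dots> \<le> cmod (fa (real N) i) * 1"
      by (intro mult_left_mono prod_le_1) (auto simp: fa_def factor_le1[unfolded fa_def])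
    also have "\<dots> = cmod (psi W (real N) i x)" using fin unfolding fa_def x_def by simp
    also have "\<dots> \<le> cmod (fct W (real N) i x)" by (rule psi_norm_le_fct[OF Wp Ws])
    also have "\<dots> \<le> W x / \<bar>real N\<bar>" using Wp N by (intro fct_norm_le) auto
    finally show ?thesis by simp
  qed
  have "(\<lambda>N. Re (Linf (real N) \<omega>)) \<longlonglongrightarrow> 0"
  proof (rule Lim_null_comparison)
    show "\<forall>\<^sub>F N in sequentially. norm (Re (Linf (real N) \<omega>)) \<le> W x / real N"
      unfolding eventually_sequentially using bnd by blast
    show "(\<lambda>N. W x / real N) \<longlonglongrightarrow> 0" by (rule lim_const_over_n)
  qed
  then show ?thesis using False by simp
qed

lemma Einf_sets: "Einf \<inter> space M \<in> sets M"
proof -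
  have "(indicator Einf :: 'a \<Rightarrow> real) \<in> borel_measurable M"
    by (rule borel_measurable_LIMSEQ_real[OF Linf_lim Linf_meas])
  then show ?thesis by (simp add: borel_measurable_indicator_iff)
qed

lemma y0_lim: "(\<lambda>N. Re (y0 (real N))) \<longlonglongrightarrow> 0"
proof (rule Lim_null_comparison)
  have l0: "0 < l" using k2 by simp
  have bnd: "norm (Re (y0 (real N))) \<le> W (X0 0) / real N" if N: "N \<ge> 1" for N
  proof -
    have "norm (Re (y0 (real N))) \<le> cmod (y0 (real N))" by (simp add: abs_Re_le_cmod)
    also have "cmod (y0 (real N)) = (\<Prod>j<l. cmod (psi W (real N) j (X0 j)))"
      unfolding y0_def prod_norm ..
    also have "\<dots> = cmod (psi W (real N) 0 (X0 0)) * (\<Prod>j\<in>{..<l} - {0}. cmod (psi W (real N) j (X0 j)))"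
      using l0 by (subst prod.remove[of _ 0]) auto
    also have "\<dots> \<le> cmod (psi W (real N) 0 (X0 0)) * 1"
      by (intro mult_left_mono prod_le_1) (auto simp: psi_norm_le1[OF Wp Ws])
    also have "\<dots> \<le> cmod (fct W (real N) 0 (X0 0))" using psi_norm_le_fct[OF Wp Ws] by simp
    also have "\<dots> \<le> W (X0 0) / \<bar>real N\<bar>" using Wp N by (intro fct_norm_le) auto
    finally show ?thesis by simp
  qed
  show "\<forall>\<^sub>F N in sequentially. norm (Re (y0 (real N))) \<le> W (X0 0) / real N"
    unfolding eventually_sequentially using bnd by blast
  show "(\<lambda>N. W (X0 0) / real N) \<longlonglongrightarrow> 0" by (rule lim_const_over_n)
qed

lemma Einf_null: "measure M (Einf \<inter> space M) = 0"
proof -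
  have "(\<lambda>N. integral\<^sup>L M (\<lambda>\<omega>. Re (Linf (real N) \<omega>))) \<longlonglongrightarrow> integral\<^sup>L M (indicator Einf)"
    by (rule integral_dominated_convergence[where w="\<lambda>_. 1"])
       (auto simp: Linf_bound intro: Linf_lim borel_measurable_LIMSEQ_real[OF Linf_lim Linf_meas])
  then have "(\<lambda>N. Re (y0 (real N))) \<longlonglongrightarrow> measure M (Einf \<inter> space M)"
    by (simp add: int_Linf)
  from LIMSEQ_unique[OF this y0_lim] show ?thesis .
qed

lemma main: "measure M {\<omega>\<in>space M. \<forall>i < 2 * k.
            \<exists>\<^sub>\<infinity>n. {I n \<omega>, I (Suc n) \<omega>} = cyc_edge (2 * k) i} = 0"
proof -
  have "{\<omega>\<in>space M. \<forall>i < 2 * k. \<exists>\<^sub>\<infinity>n. {I n \<omega>, I (Suc n) \<omega>} = cyc_edge (2 * k) i} = Einf \<inter> space M"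
    unfolding Einf_def Qs_def INFM_iff_infinite by auto
  then show ?thesis using Einf_null by simp
qed

end
theorem mainTheorem3:
  fixes M :: "'a measure" and I :: "nat \<Rightarrow> 'a \<Rightarrow> nat"
    and W :: "nat \<Rightarrow> real" and X0 :: "nat \<Rightarrow> nat" and k v0 :: nat
  assumes "prob_space M"
    and "k \<ge> 2"
    and "\<forall>m. W m > 0"
    and "summable (\<lambda>m. 1 / W m)"
    and "v0 < 2 * k"
    and "\<forall>n. I n \<in> measurable M (count_space UNIV)"
    and "AE \<omega> in M. I 0 \<omega> = v0"
    and "\<forall>n h w. measure M {\<omega>\<in>space M. (\<forall>j\<le>n. I j \<omega> = h j) \<and> I (Suc n) \<omega> = w}
               = errw_trans W X0 (2 * k) h n w * measure M {\<omega>\<in>space M. \<forall>j\<le>n. I j \<omega> = h j}"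
  shows "measure M {\<omega>\<in>space M. \<forall>i < 2 * k.
            \<exists>\<^sub>\<infinity>n. {I n \<omega>, I (Suc n) \<omega>} = cyc_edge (2 * k) i} = 0"
    by (rule errw_ctx.main[OF errw_ctx.intro[OF assms]])

end
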